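(* Let $3\le K\le N$, $M\in[0,N]$, and $\mathbf p$ with $p_1\ge\dots\ge p_N$. For every $\mathbf a\in\mathcal Q$ and every demand vector $\mathbf d\in[N]^K$ with $K$ pairwise distinct entries, $R_{\mathrm{MCCS}}(\mathbf d;\mathbf a)=R_{\mathrm{lb}}(\mathcal D(\mathbf d);\mathbf a)$. Consequently, restricting to demands with all-distinct requests (with probabilities $\prod_i p_{d_i}$ normalized over the set $\mathcal T_K$ of such demand vectors), $$\min_{\mathbf a\text{ feasible},\,\mathbf a\in\mathcal Q}\ \sum_{\mathbf d\in\mathcal T_K}\tfrac{\prod_i p_{d_i}}{Z}R_{\mathrm{MCCS}}(\mathbf d;\mathbf a)=\min_{\mathbf a\text{ feasible},\,\mathbf a\in\mathcal Q}\ \sum_{\mathbf d\in\mathcal T_K}\tfrac{\prod_i p_{d_i}}{Z}R_{\mathrm{lb}}(\mathcal D(\mathbf d);\mathbf a),$$ where $Z=\sum_{\mathbf d\in\mathcal T_K}\prod_i p_{d_i}$; i.e. the optimized MCCS attains the popularity-first-based lower bound (P2) in this regime.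
   Context: Setting: $N$ files with request probabilities $p_1\ge\dots\ge p_N$ ($\sum p_n=1$), all $p_n>0$ assumed so that $Z>0$; $K$ users, cache size $M$. $[m]=\{1,\dots,m\}$; $\binom{m}{l}=0$ if $l>m$ or $m<0$. For $\mathbf d\in[N]^K$, $\mathcal D(\mathbf d)$ is the set of distinct entries; $\mathcal T_K=\{\mathbf d\in[N]^K: |\mathcal D(\mathbf d)|=K\}$. A placement vector $\mathbf a=(a_{n,l})_{n\in[N],0\le l\le K}$ is feasible if (i) $a_{n,l}\ge0$; (ii) $\sum_{l=0}^K\binom{K}{l}a_{n,l}=1$ for each $n$; (iii) $\sum_{n=1}^N\sum_{l=1}^K\binom{K-1}{l-1}a_{n,l}\le M$. The popularity-first set is $\mathcal Q=\{\mathbf a: a_{n,l}\ge a_{n+1,l}\ \forall n\in[N-1],\ l\in[K]\}$. $R_{\mathrm{lb}}(\mathcal D;\mathbf a)=\max_{\pi}\sum_{l=0}^{K-1}\sum_{i=1}^{|\mathcal D|}\binom{K-i}{l}a_{\pi(i),l}$ over bijections $\pi:[|\mathcal D|]\to\mathcal D$. MCCS rate: for a demand $\mathbf d$, the leader group $\mathcal U(\mathbf d)\subseteq[K]$ consists of, for each file in $\mathcal D(\mathbf d)$, one user requesting it (say the smallest-index one); $R_{\mathrm{MCCS}}(\mathbf d;\mathbf a)=\sum_{\emptyset\ne\mathcal S\subseteq[K],\ \mathcal S\cap\mathcal U(\mathbf d)\ne\emptyset}\ \max_{k\in\mathcal S}a_{d_k,|\mathcal S|-1}$. (For $\mathbf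 d\in\mathcal T_K$, $\mathcal U(\mathbf d)=[K]$.) *)

theory Defs
  imports "HOL-Library.FuncSet" Complex_Main
begin

text \<open>Files are indexed by 1..N, users by 1..K, levels by 0..K.
  A placement vector is a function a :: nat => nat => real, a n l = a_{n,l}.
  A demand vector is a function d in PiE {1..K} (%_. {1..N}).\<close>

definition feasible :: "nat \<Rightarrow> nat \<Rightarrow> real \<Rightarrow> (nat \<Rightarrow> nat \<Rightarrow> real) \<Rightarrow> bool" where
  "feasible N K M a \<longleftrightarrow>
     (\<forall>n\<in>{1..N}. \<forall>l\<in>{0..K}. a n l \<ge> 0) \<and>
     (\<forall>n\<in>{1..N}. (\<Sum>l=0..K. real (K choose l) * a n l) = 1) \<and>
     (\<Sum>n=1..N. \<Sum>l=1..K. real ((K - 1) choose (l - 1)) * a n l) \<le> M"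

definition popularity_first :: "nat \<Rightarrow> nat \<Rightarrow> (nat \<Rightarrow> nat \<Rightarrow> real) \<Rightarrow> bool" where
  "popularity_first N K a \<longleftrightarrow>
     (\<forall>n\<in>{1..N-1}. \<forall>l\<in>{1..K}. a n l \<ge> a (n+1) l)"

definition demands_distinct :: "nat \<Rightarrow> nat \<Rightarrow> (nat \<Rightarrow> nat) set" where
  "demands_distinct N K = {d \<in> {1..K} \<rightarrow>\<^sub>E {1..N}. card (d ` {1..K}) = K}"

definition distinct_files :: "nat \<Rightarrow> (nat \<Rightarrow> nat) \<Rightarrow> nat set" where
  "distinct_files K d = d ` {1..K}"

definition R_lb :: "nat \<Rightarrow> nat set \<Rightarrow> (nat \<Rightarrow> nat \<Rightarrow> real) \<Rightarrow> real" where
  "R_lb K D a = Max ((\<lambda>\<pi>. \<Sum>l=0..K-1. \<Sum>i=1..card D. real ((K - i) choose l) * a (\<pi> i) l) `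
       {\<pi> \<in> {1..card D} \<rightarrow>\<^sub>E D. bij_betw \<pi> {1..card D} D})"

definition leaders :: "nat \<Rightarrow> (nat \<Rightarrow> nat) \<Rightarrow> nat set" where
  "leaders K d = {k \<in> {1..K}. \<forall>j\<in>{1..K}. j < k \<longrightarrow> d j \<noteq> d k}"

definition R_MCCS :: "nat \<Rightarrow> (nat \<Rightarrow> nat) \<Rightarrow> (nat \<Rightarrow> nat \<Rightarrow> real) \<Rightarrow> real" where
  "R_MCCS K d a = (\<Sum>S \<in> {S. S \<subseteq> {1..K} \<and> S \<noteq> {} \<and> S \<inter> leaders K d \<noteq> {}}.
       Max ((\<lambda>k. a (d k) (card S - 1)) ` S))"

definition demand_prob :: "nat \<Rightarrow> (nat \<Rightarrow> real) \<Rightarrow> (nat \<Rightarrow> nat) \<Rightarrow> real" where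
  "demand_prob K p d = (\<Prod>i=1..K. p (d i))"

definition Z_norm :: "nat \<Rightarrow> nat \<Rightarrow> (nat \<Rightarrow> real) \<Rightarrow> real" where
  "Z_norm N K p = (\<Sum>d\<in>demands_distinct N K. demand_prob K p d)"

end

theory Submission imports Defs begin

lemma pow_card_sum:
  fixes f :: "nat \<Rightarrow> real"
  assumes "finite A"
  shows "(\<Sum>V\<in>Pow A. f (card V)) = (\<Sum>l=0..card A. real (card A choose l) * f l)"
proof -
  have "(\<Sum>V\<in>Pow A. f (card V)) = (\<Sum>l=0..card A. \<Sum>V\<in>{V. V \<in> Pow A \<and> card V = l}. f (card V))"
    by (rule sum.group[symmetric]) (use assms card_mono in auto)
  also have "\<dots> = (\<Sum>l=0..card A. real (card A choose l) * f l)"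
  proof (rule sum.cong[OF refl])
    fix l assume "l \<in> {0..card A}"
    have "(\<Sum>V\<in>{V. V \<in> Pow A \<and> card V = l}. f (card V)) = (\<Sum>V\<in>{V. V \<subseteq> A \<and> card V = l}. f l)"
      by (rule sum.cong) auto
    also have "\<dots> = real (card A choose l) * f l" using n_subsets[OF assms, of l] by simp
    finally show "(\<Sum>V\<in>{V. V \<in> Pow A \<and> card V = l}. f (card V)) = real (card A choose l) * f l" .
  qed
  finally show ?thesis .
qed

lemma min_decomp:
  fixes h :: "nat set \<Rightarrow> real"
  shows "(\<Sum>U\<in>{U. U \<subseteq> {1..K} \<and> U \<noteq> {}}. h U) = (\<Sum>i=1..K. \<Sum>V\<in>Pow {i<..K}. h (insert i V))"
proof -
  have inj: "inj_on (\<lambda>(i,V). insert i V) (SIGMA i:{1..K}. Pow {i<..K})"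
  proof (rule inj_onI, clarify)
    fix i V j W assume a: "i \<in> {1..K}" "V \<subseteq> {i<..K}" "j \<in> {1..K}" "W \<subseteq> {j<..K}" "insert i V = insert j W"
    have "Min (insert i V) = i" using a by (intro Min_eqI) (auto intro: finite_subset)
    moreover have "Min (insert j W) = j" using a by (intro Min_eqI) (auto intro: finite_subset)
    ultimately have "i = j" using a by simp
    moreover have "V = W"
    proof -
      have "j \<notin> V" "j \<notin> W" using a \<open>i = j\<close> by auto
      then show ?thesis using a \<open>i = j\<close> by (metis Diff_insert_absorb)
    qed
    ultimately show "i = j \<and> V = W" by simp
  qed
  have img: "(\<lambda>(i,V). insert i V) ` (SIGMA i:{1..K}. Pow {i<..K}) = {U. U \<subseteq> {1..K} \<and> U \<noteq> {}}"
  proof (rule set_eqI, rule iffI)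
    fix U assume "U \<in> (\<lambda>(i,V). insert i V) ` (SIGMA i:{1..K}. Pow {i<..K})"
    then show "U \<in> {U. U \<subseteq> {1..K} \<and> U \<noteq> {}}" by auto
  next
    fix U assume U: "U \<in> {U. U \<subseteq> {1..K} \<and> U \<noteq> {}}"
    then have fU: "finite U" using finite_subset by auto
    define i where "i = Min U"
    have iU: "i \<in> U" using U fU i_def by auto
    have "U = insert i (U - {i})" using iU by auto
    moreover have "U - {i} \<subseteq> {i<..K}"
    proof
      fix x assume x: "x \<in> U - {i}"
      have "i \<le> x" using x fU i_def by (simp add: Min_le)
      then show "x \<in> {i<..K}" using x U by auto
    qed
    moreover have "i \<in> {1..K}" using iU U by auto
    ultimately show "U \<in> (\<lambda>(i,V). insert i V) ` (SIGMA i:{1..K}. Pow {i<..K})"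
      by (intro image_eqI[where x="(i, U - {i})"]) auto
  qed
  have "(\<Sum>i=1..K. \<Sum>V\<in>Pow {i<..K}. h (insert i V)) = (\<Sum>(i,V)\<in>(SIGMA i:{1..K}. Pow {i<..K}). h (insert i V))"
    by (rule sum.Sigma) auto
  also have "\<dots> = sum h ((\<lambda>(i,V). insert i V) ` (SIGMA i:{1..K}. Pow {i<..K}))"
    using sum.reindex[OF inj, of h] by (simp add: case_prod_beta comp_def split_def)
  finally show ?thesis using img by simp
qed


lemma count_lemma:
  fixes g :: "nat \<Rightarrow> nat \<Rightarrow> real"
  shows "(\<Sum>U\<in>{U. U \<subseteq> {1..K} \<and> U \<noteq> {}}. g (Min U) (card U - 1))
       = (\<Sum>l=0..K-1. \<Sum>i=1..K. real ((K-i) choose l) * g i l)"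
proof -
  have "(\<Sum>U\<in>{U. U \<subseteq> {1..K} \<and> U \<noteq> {}}. g (Min U) (card U - 1))
     = (\<Sum>i=1..K. \<Sum>V\<in>Pow {i<..K}. g (Min (insert i V)) (card (insert i V) - 1))"
    by (rule min_decomp)
  also have "\<dots> = (\<Sum>i=1..K. \<Sum>V\<in>Pow {i<..K}. g i (card V))"
  proof (intro sum.cong refl)
    fix i V assume "V \<in> Pow {i<..K}"
    then have V: "V \<subseteq> {i<..K}" by simp
    then have fV: "finite V" using finite_subset by blast
    have "Min (insert i V) = i" using V fV by (intro Min_eqI) auto
    moreover have "card (insert i V) = Suc (card V)"
    proof -
      have "i \<notin> V" using V by auto
      then show ?thesis using fV by simp
    qed
    ultimately show "g (Min (insert i V)) (card (insert i V) - 1) = g i (card V)" by simp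
  qed
  also have "\<dots> = (\<Sum>i=1..K. \<Sum>l=0..K-1. real ((K-i) choose l) * g i l)"
  proof (rule sum.cong[OF refl])
    fix i assume i: "i \<in> {1..K}"
    have "(\<Sum>V\<in>Pow {i<..K}. g i (card V)) = (\<Sum>l=0..card {i<..K}. real (card {i<..K} choose l) * g i l)"
      by (rule pow_card_sum) simp
    also have "\<dots> = (\<Sum>l=0..K-i. real ((K-i) choose l) * g i l)" by simp
    also have "\<dots> = (\<Sum>l=0..K-1. real ((K-i) choose l) * g i l)"
      by (rule sum.mono_neutral_left) (use i in auto)
    finally show "(\<Sum>V\<in>Pow {i<..K}. g i (card V)) = (\<Sum>l=0..K-1. real ((K-i) choose l) * g i l)" .
  qed
  also have "\<dots> = (\<Sum>l=0..K-1. \<Sum>i=1..K. real ((K-i) choose l) * g i l)"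
    by (rule sum.swap)
  finally show ?thesis .
qed

lemma mono_a:
  assumes "popularity_first N K a" "1 \<le> l" "l \<le> K" "1 \<le> m" "m \<le> n" "n \<le> N"
  shows "a n l \<le> a m l"
  using assms(5,6)
proof (induction n rule: dec_induct)
  case base then show ?case by simp
next
  case (step n)
  have "n \<in> {1..N-1}" using step assms(4) by auto
  then have "a (n+1) l \<le> a n l" using assms(1-3) unfolding popularity_first_def by auto
  then show ?case using step by simp
qed

lemma reindex_H:
  fixes a :: "nat \<Rightarrow> nat \<Rightarrow> real"
  assumes "bij_betw \<pi> {1..K} D"
  shows "(\<Sum>U\<in>{U. U \<subseteq> {1..K} \<and> U \<noteq> {}}. Max ((\<lambda>j. a (\<pi> j) (card U - 1)) ` U))
       = (\<Sum>T\<in>{T. T \<subseteq> D \<and> T \<noteq> {}}. Max ((\<lambda>f. a f (card T - 1)) ` T))"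
proof -
  have inj: "inj_on \<pi> {1..K}" and im: "\<pi> ` {1..K} = D" using assms by (auto simp: bij_betw_def)
  have inj2: "inj_on (image \<pi>) {U. U \<subseteq> {1..K} \<and> U \<noteq> {}}"
    using inj_on_image_Pow[OF inj] by (rule inj_on_subset) auto
  have im2: "image \<pi> ` {U. U \<subseteq> {1..K} \<and> U \<noteq> {}} = {T. T \<subseteq> D \<and> T \<noteq> {}}"
  proof (rule set_eqI, rule iffI)
    fix T assume "T \<in> image \<pi> ` {U. U \<subseteq> {1..K} \<and> U \<noteq> {}}"
    then show "T \<in> {T. T \<subseteq> D \<and> T \<noteq> {}}" using im by auto
  next
    fix T assume T: "T \<in> {T. T \<subseteq> D \<and> T \<noteq> {}}"
    have "T = \<pi> ` ({1..K} \<inter> \<pi> -` T)" using T im by auto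
    then show "T \<in> image \<pi> ` {U. U \<subseteq> {1..K} \<and> U \<noteq> {}}" using T
      by (intro image_eqI[where x="{1..K} \<inter> \<pi> -` T"]) auto
  qed
  have "(\<Sum>T\<in>{T. T \<subseteq> D \<and> T \<noteq> {}}. Max ((\<lambda>f. a f (card T - 1)) ` T))
     = (\<Sum>U\<in>{U. U \<subseteq> {1..K} \<and> U \<noteq> {}}. Max ((\<lambda>f. a f (card (\<pi> ` U) - 1)) ` (\<pi> ` U)))"
    unfolding im2[symmetric] by (subst sum.reindex[OF inj2]) simp
  also have "\<dots> = (\<Sum>U\<in>{U. U \<subseteq> {1..K} \<and> U \<noteq> {}}. Max ((\<lambda>j. a (\<pi> j) (card U - 1)) ` U))"
  proof (rule sum.cong[OF refl])
    fix U assume "U \<in> {U. U \<subseteq> {1..K} \<and> U \<noteq> {}}"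
    then have "card (\<pi> ` U) = card U" using inj by (auto intro: card_image inj_on_subset)
    then show "Max ((\<lambda>f. a f (card (\<pi> ` U) - 1)) ` (\<pi> ` U)) = Max ((\<lambda>j. a (\<pi> j) (card U - 1)) ` U)"
      by (simp add: image_image)
  qed
  finally show ?thesis by simp
qed


lemma main_eq:
  fixes a :: "nat \<Rightarrow> nat \<Rightarrow> real"
  assumes pf: "popularity_first N K a" and dd: "d \<in> demands_distinct N K"
  shows "R_MCCS K d a = R_lb K (distinct_files K d) a"
proof -
  define D where "D = d ` {1..K}"
  have dPi: "d \<in> {1..K} \<rightarrow>\<^sub>E {1..N}" and cD: "card D = K"
    using dd unfolding demands_distinct_def D_def by auto
  have DN: "D \<subseteq> {1..N}" using dPi unfolding D_def by auto
  have fD: "finite D" unfolding D_def by simp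
  have injd: "inj_on d {1..K}" using cD unfolding D_def by (intro eq_card_imp_inj_on) auto
  have bijd: "bij_betw d {1..K} D" using injd unfolding D_def bij_betw_def by simp
  have lead: "leaders K d = {1..K}"
    unfolding leaders_def using injd by (auto dest: inj_onD)
  define H where "H = (\<Sum>T\<in>{T. T \<subseteq> D \<and> T \<noteq> {}}. Max ((\<lambda>f. a f (card T - 1)) ` T))"
  have RM: "R_MCCS K d a = H"
  proof -
    have "{S. S \<subseteq> {1..K} \<and> S \<noteq> {} \<and> S \<inter> leaders K d \<noteq> {}} = {U. U \<subseteq> {1..K} \<and> U \<noteq> {}}"
      using lead by auto
    then have "R_MCCS K d a = (\<Sum>U\<in>{U. U \<subseteq> {1..K} \<and> U \<noteq> {}}. Max ((\<lambda>j. a (d j) (card U - 1)) ` U))"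
      unfolding R_MCCS_def by simp
    also have "\<dots> = H" unfolding H_def by (rule reindex_H[OF bijd])
    finally show ?thesis .
  qed
  define F where "F = (\<lambda>\<pi>::nat\<Rightarrow>nat. \<Sum>l=0..K-1. \<Sum>i=1..K. real ((K-i) choose l) * a (\<pi> i) l)"
  have FG: "F \<pi> = (\<Sum>U\<in>{U. U \<subseteq> {1..K} \<and> U \<noteq> {}}. a (\<pi> (Min U)) (card U - 1))" for \<pi>
    unfolding F_def using count_lemma[of "\<lambda>i l. a (\<pi> i) l" K] by simp
  have Fle: "F \<pi> \<le> H" if "bij_betw \<pi> {1..K} D" for \<pi>
  proof -
    have "F \<pi> \<le> (\<Sum>U\<in>{U. U \<subseteq> {1..K} \<and> U \<noteq> {}}. Max ((\<lambda>j. a (\<pi> j) (card U - 1)) ` U))"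
      unfolding FG
    proof (rule sum_mono)
      fix U assume U: "U \<in> {U. U \<subseteq> {1..K} \<and> U \<noteq> {}}"
      then have fU: "finite U" using finite_subset by auto
      have "Min U \<in> U" using U fU by auto
      then show "a (\<pi> (Min U)) (card U - 1) \<le> Max ((\<lambda>j. a (\<pi> j) (card U - 1)) ` U)"
        using fU by (intro Max_ge) auto
    qed
    also have "\<dots> = H" unfolding H_def by (rule reindex_H[OF that])
    finally show ?thesis .
  qed
  define s where "s = sorted_list_of_set D"
  define \<sigma> where "\<sigma> = restrict (\<lambda>i. s ! (i - 1)) {1..K}"
  have ls: "length s = K" unfolding s_def using cD by simp
  have sets: "set s = D" unfolding s_def using fD by simp
  have sw: "sorted_wrt (<) s" unfolding s_def by simp
  have smono: "\<sigma> i < \<sigma> j" if "i \<in> {1..K}" "j \<in> {1..K}" "i < j" for i j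
    using that sw ls unfolding \<sigma>_def by (auto intro: sorted_wrt_nth_less)
  have sPi: "\<sigma> \<in> {1..K} \<rightarrow>\<^sub>E D"
    unfolding \<sigma>_def using ls sets by (auto intro!: nth_mem)
  have sinj: "inj_on \<sigma> {1..K}"
  proof (rule inj_onI)
    fix i j assume "i \<in> {1..K}" "j \<in> {1..K}" "\<sigma> i = \<sigma> j"
    then show "i = j" using smono[of i j] smono[of j i] by (cases i j rule: linorder_cases) auto
  qed
  have sbij: "bij_betw \<sigma> {1..K} D"
  proof -
    have "\<sigma> ` {1..K} \<subseteq> D" using sPi by auto
    moreover have "card (\<sigma> ` {1..K}) = card D" using sinj cD by (simp add: card_image)
    ultimately have "\<sigma> ` {1..K} = D" using fD by (intro card_subset_eq) auto
    then show ?thesis using sinj unfolding bij_betw_def by simp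
  qed
  have Fs: "F \<sigma> = H"
  proof -
    have "F \<sigma> = (\<Sum>U\<in>{U. U \<subseteq> {1..K} \<and> U \<noteq> {}}. Max ((\<lambda>j. a (\<sigma> j) (card U - 1)) ` U))"
      unfolding FG
    proof (rule sum.cong[OF refl])
      fix U assume U: "U \<in> {U. U \<subseteq> {1..K} \<and> U \<noteq> {}}"
      then have fU: "finite U" using finite_subset by auto
      have mU: "Min U \<in> U" using U fU by auto
      have cU: "card U \<le> K" using U card_mono[of "{1..K}" U] by auto
      have cU1: "card U \<ge> 1" using U fU by (simp add: Suc_leI card_gt_0_iff)
      show "a (\<sigma> (Min U)) (card U - 1) = Max ((\<lambda>j. a (\<sigma> j) (card U - 1)) ` U)"
      proof (rule sym, rule Max_eqI)
        show "finite ((\<lambda>j. a (\<sigma> j) (card U - 1)) ` U)" using fU by simp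
        show "a (\<sigma> (Min U)) (card U - 1) \<in> (\<lambda>j. a (\<sigma> j) (card U - 1)) ` U" using mU by simp
      next
        fix y assume "y \<in> (\<lambda>j. a (\<sigma> j) (card U - 1)) ` U"
        then obtain j where j: "j \<in> U" "y = a (\<sigma> j) (card U - 1)" by auto
        show "y \<le> a (\<sigma> (Min U)) (card U - 1)"
        proof (cases "card U = 1")
          case True
          then obtain x where "U = {x}" using card_1_singletonE by blast
          then show ?thesis using j by simp
        next
          case False
          have le: "Min U \<le> j" using j fU by simp
          have m1: "Min U \<in> {1..K}" "j \<in> {1..K}" using mU j U by auto
          have "\<sigma> (Min U) \<le> \<sigma> j"
          proof (cases "Min U = j")
            case True then show ?thesis by simp
          next
            case False then have "Min U < j" using le by simp
            then show ?thesis using smono[OF m1] by simp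
          qed
          moreover have "\<sigma> (Min U) \<in> D" "\<sigma> j \<in> D"
            using sPi m1 by (auto simp: PiE_iff)
          then have "\<sigma> (Min U) \<in> {1..N}" "\<sigma> j \<in> {1..N}" using DN by auto
          ultimately have "a (\<sigma> j) (card U - 1) \<le> a (\<sigma> (Min U)) (card U - 1)"
            using False cU cU1 by (intro mono_a[OF pf]) auto
          then show ?thesis using j by simp
        qed
      qed
    qed
    also have "\<dots> = H" unfolding H_def by (rule reindex_H[OF sbij])
    finally show ?thesis .
  qed
  define P where "P = {\<pi> \<in> {1..K} \<rightarrow>\<^sub>E D. bij_betw \<pi> {1..K} D}"
  have "R_lb K (distinct_files K d) a = Max (F ` P)"
    unfolding R_lb_def distinct_files_def P_def F_def
    using cD D_def by simp
  also have "\<dots> = H"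
  proof (rule Max_eqI)
    have "finite P" unfolding P_def
      by (rule finite_subset[of _ "{1..K} \<rightarrow>\<^sub>E D"]) (use fD in \<open>auto intro: finite_PiE\<close>)
    then show "finite (F ` P)" by simp
    show "H \<in> F ` P" using Fs sPi sbij unfolding P_def by (auto intro!: image_eqI[where x=\<sigma>])
  next
    fix y assume "y \<in> F ` P"
    then show "y \<le> H" using Fle unfolding P_def by auto
  qed
  finally show ?thesis using RM by simp
qed

theorem theorem3:
  fixes N K :: nat and M :: real and p :: "nat \<Rightarrow> real"
  assumes "3 \<le> K" and "K \<le> N"
    and "0 \<le> M" and "M \<le> real N"
    and "\<forall>n\<in>{1..N}. p n > 0"
    and "(\<Sum>n=1..N. p n) = 1"
    and "\<forall>n\<in>{1..N-1}. p n \<ge> p (n+1)"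
  shows "(\<forall>a. popularity_first N K a \<longrightarrow>
            (\<forall>d\<in>demands_distinct N K. R_MCCS K d a = R_lb K (distinct_files K d) a))
       \<and> (INF a\<in>{a. feasible N K M a \<and> popularity_first N K a}.
            \<Sum>d\<in>demands_distinct N K. demand_prob K p d / Z_norm N K p * R_MCCS K d a)
       = (INF a\<in>{a. feasible N K M a \<and> popularity_first N K a}.
            \<Sum>d\<in>demands_distinct N K. demand_prob K p d / Z_norm N K p * R_lb K (distinct_files K d) a)"
proof
  show A: "\<forall>a. popularity_first N K a \<longrightarrow>
            (\<forall>d\<in>demands_distinct N K. R_MCCS K d a = R_lb K (distinct_files K d) a)"
    using main_eq by blast
  show "(INF a\<in>{a. feasible N K M a \<and> popularity_first N K a}.
            \<Sum>d\<in>demands_distinct N K. demand_prob K p d / Z_norm N K p * R_MCCS K d a)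
       = (INF a\<in>{a. feasible N K M a \<and> popularity_first N K a}.
            \<Sum>d\<in>demands_distinct N K. demand_prob K p d / Z_norm N K p * R_lb K (distinct_files K d) a)"
    by (rule INF_cong[OF refl], rule sum.cong[OF refl]) (use main_eq in auto)
qed

end
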